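(* Let $m\ge2$, $n$ be integers and $k$ an integer with $1\le k\le n^2-3n+2$, written $k=(n-1)q+r$ with $q\ge0$, $1\le r\le n-1$. Let $M_1=(\mu_{ij})$ be the $n\times n$ $0/1$ matrix with $\mu_{1,n-1}=\mu_{1,n}=1$, $\mu_{i,i-1}=1$ for $2\le i\le n$, all other entries $0$. Let $\mathbb{A}_0$ be the order $m$, dimension $n$ tensor with $(\mathbb{A}_0)_{ij\ldots j}=\mu_{ij}$ and all entries with $i_2,\ldots,i_m$ not all equal equal to $0$. Let $\mathbb{A}_k=(a^{(k)}_{i_1\ldots i_m})$ be the order $m$, dimension $n$ tensor with $a^{(k)}_{ij\ldots j}=\mu_{ij}$; $a^{(k)}_{ii_2\ldots i_m}=1$ whenever $i\in[n]\setminus\{r-q,\ldots,r,r+1\}\pmod n$ and the set of distinct values among $i_2,\ldots,i_m$ equals $\{r-q-1,r\}\pmod n$; and all other entries $0$. Then for every integer $t$ with $1\le t\le k$ and every $j\in\{1,2,\ldots,n-2\}\cup\{n\}$, $S_t(\mathbb{A}_k,j)=S_t(\mathbb{A}_0,j)$.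
   Context: For an integer $a$, $|a|_n$ is the least positive integer congruent to $a$ modulo $n$, and $\{a_1,\ldots,a_s\}\pmod n$ means $\{|a_1|_n,\ldots,|a_s|_n\}$. General product of dimension-$n$ tensors: for $\mathbb{A}$ of order $m\ge2$ and $\mathbb{B}$ of order $k\ge1$, $(\mathbb{A}\mathbb{B})_{i\alpha_1\ldots\alpha_{m-1}}=\sum_{i_2,\ldots,i_m=1}^n a_{ii_2\ldots i_m}b_{i_2\alpha_1}\cdots b_{i_m\alpha_{m-1}}$ ($\alpha_l\in[n]^{k-1}$); it is associative and $\mathbb{A}^k$ is the $k$-fold power. $(M(\mathbb{C}))_{ij}=c_{ij\ldots j}$ is the majorization matrix. For $j\in[n]$, $k\ge1$: $S_k(\mathbb{A},j)=\{u\in[n]\mid (M(\mathbb{A}^k))_{uj}>0\}$. *)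

theory Defs
  imports Complex_Main
begin

text \<open>A tensor of order p and dimension n is represented as a function from index lists
  (of length p, entries in {1..n}) to real numbers; values outside this domain are irrelevant.\<close>
type_synonym tensor = "nat list \<Rightarrow> real"

text \<open>General product of A (order m) and B (order p), dimension n:
  (AB)_{i alpha_1 ... alpha_{m-1}} = sum_{i_2..i_m} a_{i i_2..i_m} b_{i_2 alpha_1} ... b_{i_m alpha_{m-1}},
  where each alpha_l has length p-1.\<close>
definition tprod :: "nat \<Rightarrow> nat \<Rightarrow> nat \<Rightarrow> tensor \<Rightarrow> tensor \<Rightarrow> tensor" where
  "tprod n m p A B = (\<lambda>is. case is of [] \<Rightarrow> 0
     | i # rest \<Rightarrow>
        (\<Sum>js\<in>{js. length js = m - 1 \<and> set js \<subseteq> {1..n}}.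
           A (i # js) * (\<Prod>l<m - 1. B (js ! l # take (p - 1) (drop (l * (p - 1)) rest)))))"

text \<open>tpow n m A t is the t-th power A^t (t >= 1) of an order m tensor A, of order (m-1)^t + 1.\<close>
fun tpow :: "nat \<Rightarrow> nat \<Rightarrow> tensor \<Rightarrow> nat \<Rightarrow> tensor" where
  "tpow n m A 0 = (\<lambda>_. 0)"
| "tpow n m A (Suc 0) = A"
| "tpow n m A (Suc (Suc t)) = tprod n m ((m - 1) ^ Suc t + 1) A (tpow n m A (Suc t))"

definition majm :: "nat \<Rightarrow> tensor \<Rightarrow> nat \<Rightarrow> nat \<Rightarrow> real" where
  "majm p C i j = C (i # replicate (p - 1) j)"

definition Sset :: "nat \<Rightarrow> nat \<Rightarrow> tensor \<Rightarrow> nat \<Rightarrow> nat \<Rightarrow> nat set" where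
  "Sset n m A t j = {u \<in> {1..n}. majm ((m - 1) ^ t + 1) (tpow n m A t) u j > 0}"

definition modn :: "nat \<Rightarrow> int \<Rightarrow> int" where
  "modn n a = (if a mod int n = 0 then int n else a mod int n)"

definition mu :: "nat \<Rightarrow> nat \<Rightarrow> nat \<Rightarrow> real" where
  "mu n i j = (if (i = 1 \<and> (j = n - 1 \<or> j = n)) \<or> (2 \<le> i \<and> i \<le> n \<and> j = i - 1) then 1 else 0)"

definition A0 :: "nat \<Rightarrow> tensor" where
  "A0 n = (\<lambda>is. case is of [] \<Rightarrow> 0
     | i # js \<Rightarrow> if js \<noteq> [] \<and> (\<forall>x\<in>set js. x = hd js) then mu n i (hd js) else 0)"

definition Ak :: "nat \<Rightarrow> nat \<Rightarrow> nat \<Rightarrow> tensor" where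
  "Ak n q r = (\<lambda>is. case is of [] \<Rightarrow> 0
     | i # js \<Rightarrow>
        if js \<noteq> [] \<and> (\<forall>x\<in>set js. x = hd js) then mu n i (hd js)
        else if int i \<notin> modn n ` {int r - int q .. int r + 1}
                \<and> int ` set js = {modn n (int r - int q - 1), modn n (int r)} then 1
        else 0)"

end

theory Submission
  imports Defs
begin


lemma tpow_nonneg0:
  "(\<forall>xs. A xs \<ge> 0) \<longrightarrow> tpow n m A t xs \<ge> 0"
proof (induction n m A t arbitrary: xs rule: tpow.induct)
  case (1 n m A) then show ?case by simp
next
  case (2 n m A) then show ?case by simp
next
  case (3 n m A t)
  show ?case
    using 3 by (auto simp: tprod_def split: list.splits intro!: sum_nonneg mult_nonneg_nonneg prod_nonneg)
qed

lemma tpow_nonneg: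
  assumes "\<And>xs. A xs \<ge> 0"
  shows "tpow n m A t xs \<ge> 0"
  using tpow_nonneg0 assms by blast

lemma Sset_1: "Sset n m A (Suc 0) j = {u\<in>{1..n}. A (u # replicate (m-1) j) > 0}"
  by (simp add: Sset_def majm_def)

lemma sum_pos_iff_ex:
  fixes f :: "'a \<Rightarrow> real"
  assumes "finite S" "\<And>x. x \<in> S \<Longrightarrow> f x \<ge> 0"
  shows "(\<Sum>x\<in>S. f x) > 0 \<longleftrightarrow> (\<exists>x\<in>S. f x > 0)"
proof
  assume "(\<Sum>x\<in>S. f x) > 0"
  then show "\<exists>x\<in>S. f x > 0"
    by (metis leI less_le_not_le sum_nonpos)
next
  assume "\<exists>x\<in>S. f x > 0"
  then show "(\<Sum>x\<in>S. f x) > 0" using assms sum_pos2 by metis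
qed

lemma prod_pos_iff_all:
  fixes f :: "'a \<Rightarrow> real"
  assumes "finite S" "\<And>x. x \<in> S \<Longrightarrow> f x \<ge> 0"
  shows "(\<Prod>x\<in>S. f x) > 0 \<longleftrightarrow> (\<forall>x\<in>S. f x > 0)"
proof
  assume h: "(\<Prod>x\<in>S. f x) > 0"
  show "\<forall>x\<in>S. f x > 0"
  proof
    fix x assume "x \<in> S"
    show "f x > 0"
    proof (rule ccontr)
      assume "\<not> f x > 0"
      then have "f x = 0" using assms(2) \<open>x\<in>S\<close> by force
      then have "(\<Prod>x\<in>S. f x) = 0" using assms(1) \<open>x\<in>S\<close> by (meson prod_zero_iff)
      then show False using h by simp
    qed
  qed
next
  assume "\<forall>x\<in>S. f x > 0" then show "(\<Prod>x\<in>S. f x) > 0" by (simp add: prod_pos)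
qed

lemma take_drop_rep:
  assumes "l < m - 1"
  shows "take P (drop (l * P) (replicate ((m - 1) * P) j)) = replicate P j"
proof -
  have "(m - 1) * P - l * P = (m - 1 - l) * P" by (simp add: diff_mult_distrib)
  moreover have "(m - 1 - l) * P \<ge> P"
  proof -
    obtain d where "m - 1 - l = Suc d" using assms by (metis Suc_diff_Suc zero_less_diff)
    then show ?thesis by simp
  qed
  ultimately show ?thesis by (simp add: min_def)
qed

lemma tprod_rep:
  "tprod n m (P+1) A B (u # replicate ((m-1)*P) j) = (\<Sum>js\<in>{js. length js = m - 1 \<and> set js \<subseteq> {1..n}}. A (u # js) * (\<Prod>l<m - 1. B (js ! l # replicate P j)))"
  unfolding tprod_def
  by (auto intro!: sum.cong prod.cong simp del: take_replicate drop_replicate simp add: take_drop_rep[simplified])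

lemma Sset_Suc:
  assumes nn: "\<And>xs. A xs \<ge> 0" and m: "m \<ge> 2" and t: "t \<ge> 1"
  shows "Sset n m A (Suc t) j = {u\<in>{1..n}. \<exists>js. length js = m-1 \<and> set js \<subseteq> {1..n}
            \<and> A (u#js) > 0 \<and> set js \<subseteq> Sset n m A t j}"
proof -
  obtain t' where t': "t = Suc t'" using t by (cases t) auto
  define P where "P = (m - 1) ^ t"
  define B where "B = tpow n m A t"
  define L where "L = {js. length js = m - 1 \<and> set js \<subseteq> {1..n}}"
  have finL: "finite L"
  proof -
    have "L = {xs. set xs \<subseteq> {1..n} \<and> length xs = m - 1}" unfolding L_def by auto
    then show ?thesis using finite_lists_length_eq[of "{1..n}" "m-1"] by simp
  qed
  have Bnn: "\<And>xs. B xs \<ge> 0" unfolding B_def using tpow_nonneg nn by blast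
  have pw: "(m - 1) ^ Suc t = (m - 1) * P" unfolding P_def by simp
  have key: "majm ((m - 1) ^ Suc t + 1) (tpow n m A (Suc t)) u j
     = (\<Sum>js\<in>L. A (u # js) * (\<Prod>l<m - 1. B (js ! l # replicate P j)))" for u
  proof -
    have "majm ((m - 1) ^ Suc t + 1) (tpow n m A (Suc t)) u j
       = tprod n m ((m - 1) ^ t + 1) A B (u # replicate ((m-1) * P) j)"
    proof -
      have e: "tpow n m A (Suc t) = tprod n m ((m-1)^t+1) A (tpow n m A t)" using t' by simp
      show ?thesis unfolding majm_def B_def e pw by simp
    qed
    also have "\<dots> = (\<Sum>js\<in>L. A (u # js) * (\<Prod>l<m - 1. B (js ! l # replicate P j)))"
      unfolding L_def using tprod_rep[of n m P A B u j] unfolding P_def by simp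
    finally show ?thesis .
  qed
  have SB: "Sset n m A t j = {v\<in>{1..n}. B (v # replicate P j) > 0}"
    unfolding Sset_def majm_def B_def P_def by simp
  show ?thesis
  proof (rule set_eqI)
    fix u
    have "u \<in> Sset n m A (Suc t) j \<longleftrightarrow> u \<in> {1..n} \<and>
        (\<Sum>js\<in>L. A (u # js) * (\<Prod>l<m - 1. B (js ! l # replicate P j))) > 0"
      using key unfolding Sset_def by simp
    also have "\<dots> \<longleftrightarrow> u \<in> {1..n} \<and> (\<exists>js\<in>L. A (u # js) * (\<Prod>l<m - 1. B (js ! l # replicate P j)) > 0)"
      using sum_pos_iff_ex[OF finL] Bnn nn by (simp add: prod_nonneg)
    also have "\<dots> \<longleftrightarrow> u \<in> {1..n} \<and> (\<exists>js\<in>L. A (u # js) > 0 \<and> (\<forall>l<m - 1. B (js ! l # replicate P j) > 0))"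
    proof -
      have "A (u # js) * (\<Prod>l<m - 1. B (js ! l # replicate P j)) > 0 \<longleftrightarrow>
            A (u # js) > 0 \<and> (\<forall>l<m - 1. B (js ! l # replicate P j) > 0)" for js
      proof -
        have p: "(\<Prod>l<m - 1. B (js ! l # replicate P j)) \<ge> 0" using Bnn by (simp add: prod_nonneg)
        have "A (u # js) * (\<Prod>l<m - 1. B (js ! l # replicate P j)) > 0 \<longleftrightarrow>
            A (u # js) > 0 \<and> (\<Prod>l<m - 1. B (js ! l # replicate P j)) > 0"
          using nn[of "u#js"] p by (auto simp: zero_less_mult_iff)
        moreover have "(\<Prod>l<m - 1. B (js ! l # replicate P j)) > 0 \<longleftrightarrow> (\<forall>l\<in>{..<m - 1}. B (js ! l # replicate P j) > 0)"
          by (rule prod_pos_iff_all) (auto simp: Bnn)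
        ultimately show ?thesis by (simp add: lessThan_iff Ball_def)
      qed
      then show ?thesis by simp
    qed
    also have "\<dots> \<longleftrightarrow> u \<in> {u\<in>{1..n}. \<exists>js. length js = m-1 \<and> set js \<subseteq> {1..n}
            \<and> A (u#js) > 0 \<and> set js \<subseteq> Sset n m A t j}"
    proof -
      have eqv: "(\<forall>l<m-1. 0 < B (js!l # replicate P j)) \<longleftrightarrow> (\<forall>x\<in>set js. 0 < B (x # replicate P j))"
        if "length js = m-1" for js
        using that by (simp add: all_set_conv_all_nth)
      have "(\<exists>js\<in>L. A (u # js) > 0 \<and> (\<forall>l<m - 1. B (js ! l # replicate P j) > 0)) \<longleftrightarrow>
            (\<exists>js. length js = m-1 \<and> set js \<subseteq> {1..n}
            \<and> A (u#js) > 0 \<and> set js \<subseteq> Sset n m A t j)"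
      proof
        assume "\<exists>js\<in>L. A (u # js) > 0 \<and> (\<forall>l<m - 1. B (js ! l # replicate P j) > 0)"
        then obtain js where h: "js \<in> L" "A (u # js) > 0" "\<forall>l<m - 1. B (js ! l # replicate P j) > 0" by blast
        then have "\<forall>x\<in>set js. 0 < B (x # replicate P j)" using eqv unfolding L_def by blast
        then have "set js \<subseteq> Sset n m A t j" using h(1) unfolding SB L_def by auto
        then show "\<exists>js. length js = m-1 \<and> set js \<subseteq> {1..n}
            \<and> A (u#js) > 0 \<and> set js \<subseteq> Sset n m A t j" using h unfolding L_def by blast
      next
        assume "\<exists>js. length js = m-1 \<and> set js \<subseteq> {1..n}
            \<and> A (u#js) > 0 \<and> set js \<subseteq> Sset n m A t j"
        then obtain js where h: "length js = m-1" "set js \<subseteq> {1..n}" "A (u#js) > 0" "set js \<subseteq> Sset n m A t j" by blast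
        then have "\<forall>x\<in>set js. 0 < B (x # replicate P j)" unfolding SB by auto
        then have "\<forall>l<m - 1. B (js ! l # replicate P j) > 0" using eqv h(1) by blast
        then show "\<exists>js\<in>L. A (u # js) > 0 \<and> (\<forall>l<m - 1. B (js ! l # replicate P j) > 0)"
          using h unfolding L_def by blast
      qed
      then show ?thesis by simp
    qed
    finally show "u \<in> Sset n m A (Suc t) j \<longleftrightarrow> u \<in> {u\<in>{1..n}. \<exists>js. length js = m-1 \<and> set js \<subseteq> {1..n}
            \<and> A (u#js) > 0 \<and> set js \<subseteq> Sset n m A t j}" .
  qed
qed



lemma mod_uniq:
  fixes a N q r :: int
  assumes "a = N*q + r" "0 \<le> r" "r < N"
  shows "a mod N = r"
  using assms by (metis add.commute mod_mult_self2 mod_pos_pos_trivial)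

lemma no_mult_between:
  fixes a N w :: int
  assumes "0 < a" "a < N" "a = N * w"
  shows False
proof (cases "w \<le> 0")
  case True
  then have "N * w \<le> 0" using assms by (simp add: mult_nonneg_nonpos)
  then show False using assms by simp
next
  case False
  have "1 \<le> w" using False by simp
  moreover have "0 \<le> N" using assms by linarith
  ultimately have "N * 1 \<le> N * w" by (intro mult_left_mono)
  then show False using assms by linarith
qed

lemma divmod_rep:
  fixes a N :: int
  shows "a = N * (a div N) + a mod N"
  by simp

definition R :: "nat \<Rightarrow> int \<Rightarrow> int \<Rightarrow> nat set" where
  "R n T G = {u \<in> {1..n}. (int u - T) mod int n \<le> G}"

definition gg :: "nat \<Rightarrow> int \<Rightarrow> int" where
  "gg n T = (T - 1) div (int n - 1)"

lemma mu_pos: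
  assumes "u \<in> {1..n}" "v \<in> {1..n}" "n \<ge> 3"
  shows "mu n u v > 0 \<longleftrightarrow> (if u \<ge> 2 then v = u - 1 else (v = n - 1 \<or> v = n))"
  using assms unfolding mu_def by auto

lemma step_R:
  assumes n3: "n \<ge> 3" and T: "T \<ge> 1"
  shows "{u\<in>{1..n}. \<exists>v\<in>R n T (gg n T). mu n u v > 0} = R n (T+1) (gg n (T+1))"
proof -
  define N where "N = int n"
  have N3: "N \<ge> 3" using n3 N_def by simp
  define G where "G = gg n T"
  define \<rho> where "\<rho> = (T - 1) mod (N - 1)"
  have Trep: "T - 1 = (N - 1) * G + \<rho>" unfolding G_def \<rho>_def gg_def N_def by simp
  have \<rho>0: "0 \<le> \<rho>" and \<rho>1: "\<rho> < N - 1" unfolding \<rho>_def using N3 by simp_all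
  have G0: "G \<ge> 0" unfolding G_def gg_def N_def using T n3 by (simp add: pos_imp_zdiv_nonneg_iff)
  define G' where "G' = gg n (T+1)"
  have G'eq: "G' = (if \<rho> = N - 2 then G + 1 else G)"
  proof -
    have G'd: "G' = T div (N - 1)" unfolding G'_def gg_def N_def by simp
    show ?thesis
    proof (cases "\<rho> = N - 2")
      case True
      then have "T = (N - 1) * (G + 1) + 0" using Trep by (simp add: algebra_simps)
      then have "T div (N - 1) = G + 1" using N3 by simp
      then show ?thesis using True G'd by simp
    next
      case False
      then have "T = (N - 1) * G + (\<rho> + 1)" using Trep by (simp add: algebra_simps)
      moreover have "0 \<le> \<rho> + 1" "\<rho> + 1 < N - 1" using \<rho>0 \<rho>1 False by auto
      ultimately have "T div (N - 1) = G"
        by (metis add.commute div_mult_self2 div_pos_pos_trivial mult.commute N3 add_0 less_irrefl zero_less_diff le_less_trans zero_le_one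
            \<open>0 \<le> \<rho> + 1\<close> not_numeral_le_zero)
      then show ?thesis using False G'd by simp
    qed
  qed
  have RT: "R n T G = {u \<in> {1..n}. (int u - T) mod N \<le> G}" unfolding R_def N_def by simp
  have RT': "R n (T+1) G' = {u \<in> {1..n}. (int u - (T+1)) mod N \<le> G'}" unfolding R_def N_def by simp
  show ?thesis
    unfolding G_def[symmetric] G'_def[symmetric]
  proof (rule set_eqI)
    fix u
    show "u \<in> {u\<in>{1..n}. \<exists>v\<in>R n T G. mu n u v > 0} \<longleftrightarrow> u \<in> R n (T+1) G'"
    proof (cases "u \<in> {1..n}")
      case False
      then show ?thesis unfolding RT' by auto
    next
      case u: True
      have Rsub: "R n T G \<subseteq> {1..n}" unfolding RT by auto
      have ex: "(\<exists>v\<in>R n T G. mu n u v > 0) \<longleftrightarrow>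
          (if u \<ge> 2 then u - 1 \<in> R n T G else (n - 1 \<in> R n T G \<or> n \<in> R n T G))"
      proof -
        have mu': "\<And>v. v \<in> R n T G \<Longrightarrow> mu n u v > 0 \<longleftrightarrow> (if u \<ge> 2 then v = u - 1 else (v = n - 1 \<or> v = n))"
          using mu_pos[OF u _ n3] Rsub by blast
        show ?thesis
        proof (cases "u \<ge> 2")
          case True
          then show ?thesis using mu'[of "u-1"] mu' by auto
        next
          case False
          then show ?thesis using mu'[of "n-1"] mu'[of n] mu' by auto
        qed
      qed
      show ?thesis
      proof (cases "u \<ge> 2")
        case True
        define D where "D = (int u - T - 1) mod N"
        have L: "u - 1 \<in> R n T G \<longleftrightarrow> D \<le> G"
          unfolding RT D_def using True u by (auto simp add: of_nat_diff algebra_simps)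
        have Rr: "u \<in> R n (T+1) G' \<longleftrightarrow> D \<le> G'"
          unfolding RT' D_def using u by (simp add: algebra_simps)
        have "D \<le> G \<longleftrightarrow> D \<le> G'"
        proof (cases "\<rho> = N - 2")
          case False then show ?thesis using G'eq by simp
        next
          case rho: True
          have "D \<noteq> G + 1"
          proof
            assume DG: "D = G + 1"
            have "int u - T - 1 = N * ((int u - T - 1) div N) + D" unfolding D_def by simp
            then have "int u - 1 = N * ((int u - T - 1) div N + G + 1)"
              using DG Trep rho by (simp add: algebra_simps)
            moreover have "0 < int u - 1" "int u - 1 < N" using u True N_def by auto
            ultimately show False using no_mult_between by blast
          qed
          then show ?thesis using G'eq rho by auto
        qed
        then show ?thesis using ex True L Rr u by simp
      next
        case False
        then have u1: "u = 1" using u by simp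
        define E where "E = (- T) mod N"
        have E0: "0 \<le> E" "E < N" unfolding E_def using N3 by simp_all
        have Erep: "- T = N * ((- T) div N) + E" unfolding E_def by simp
        have Rn: "n \<in> R n T G \<longleftrightarrow> E \<le> G"
        proof -
          have "(int n - T) mod N = E"
            using mod_uniq[of "int n - T" N "(- T) div N + 1" E] Erep E0 N_def by (simp add: algebra_simps)
          then show ?thesis unfolding RT using n3 N_def by simp
        qed
        have Rn1: "n - 1 \<in> R n T G \<longleftrightarrow> (if E = 0 then N - 1 \<le> G else E - 1 \<le> G)"
        proof -
          have "(int (n - 1) - T) mod N = (if E = 0 then N - 1 else E - 1)"
          proof (cases "E = 0")
            case True
            then show ?thesis
              using mod_uniq[of "int (n-1) - T" N "(- T) div N" "N - 1"] Erep E0 N_def n3 by (simp add: of_nat_diff algebra_simps)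
          next
            case False
            then show ?thesis
              using mod_uniq[of "int (n-1) - T" N "(- T) div N + 1" "E - 1"] Erep E0 N_def n3 by (simp add: of_nat_diff algebra_simps)
          qed
          then show ?thesis unfolding RT using n3 N_def by (auto simp: of_nat_diff)
        qed
        have Rr: "u \<in> R n (T+1) G' \<longleftrightarrow> E \<le> G'"
          unfolding RT' E_def using u1 n3 by simp
        have "((if E = 0 then N - 1 \<le> G else E - 1 \<le> G) \<or> E \<le> G) \<longleftrightarrow> E \<le> G'"
        proof (cases "\<rho> = N - 2")
          case True then show ?thesis using G'eq G0 by auto
        next
          case rho: False
          have "E \<noteq> G + 1"
          proof
            assume EG: "E = G + 1"
            then have "\<rho> + 2 = N * (- ((- T) div N) - G)"
              using Erep Trep by (simp add: algebra_simps)
            moreover have "0 < \<rho> + 2" "\<rho> + 2 < N" using \<rho>0 \<rho>1 rho by auto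
            ultimately show False using no_mult_between by blast
          qed
          then show ?thesis using G'eq rho G0 by auto
        qed
        then show ?thesis using ex u1 Rn Rn1 Rr n3 by auto
      qed
    qed
  qed
qed



lemma comb:
  fixes N T q r u :: int
  assumes N3: "N \<ge> 3" and q0: "0 \<le> q" and qN: "q + 3 \<le> N" and r1: "1 \<le> r" and rN: "r \<le> N - 1"
    and T1: "T \<ge> 1" and Tb: "T \<le> (N-1)*q + r + N - 3"
    and Da: "(r - q - 1 - T) mod N \<le> (T-1) div (N-1)"
    and Db: "(r - T) mod N \<le> (T-1) div (N-1)"
    and u1: "1 \<le> u" and uN: "u \<le> N"
    and notin: "\<And>z. r - q \<le> z \<Longrightarrow> z \<le> r + 1 \<Longrightarrow> z mod N \<noteq> u mod N"
  shows "(u - T - 1) mod N \<le> (T-1) div (N-1)"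
proof -
  define G where "G = (T-1) div (N-1)"
  define \<rho> where "\<rho> = (T-1) mod (N-1)"
  have Trep: "T - 1 = (N - 1) * G + \<rho>" unfolding G_def \<rho>_def by simp
  have \<rho>0: "0 \<le> \<rho>" and \<rho>1: "\<rho> < N - 1" unfolding \<rho>_def using N3 by simp_all
  have Gq: "G \<le> q + 1"
  proof -
    have "(N - 1) * G < (N - 1) * (q + 2)" using Trep \<rho>0 Tb rN by (simp add: algebra_simps)
    then have "G < q + 2" using N3 by (simp add: mult_less_cancel_left)
    then show ?thesis by simp
  qed
  define A where "A = (r - q - 1 - T) mod N"
  define B where "B = (r - T) mod N"
  have A0: "0 \<le> A" "A < N" unfolding A_def using N3 by simp_all
  have B0: "0 \<le> B" "B < N" unfolding B_def using N3 by simp_all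
  have Arep: "r - q - 1 - T = N * ((r - q - 1 - T) div N) + A" unfolding A_def by simp
  have Brep: "r - T = N * ((r - T) div N) + B" unfolding B_def by simp
  define c where "c = (r - T) div N - (r - q - 1 - T) div N"
  have BA: "B - A = q + 1 - N * c" using Arep Brep unfolding c_def by (simp add: algebra_simps)
  have AG: "A \<le> G" and BG: "B \<le> G" using Da Db unfolding A_def B_def G_def by auto
  show ?thesis
  proof (cases "A \<le> B")
    case True
    have "N * c \<ge> 0" using BA BG Gq A0 by simp
    moreover have "N * c < N" using BA True qN by simp
    ultimately have c0: "c = 0"
    proof -
      assume h1: "N * c \<ge> 0" and h2: "N * c < N"
      have "c \<ge> 0" using h1 N3 by (simp add: zero_le_mult_iff)
      moreover have "N * c < N * 1" using h2 by simp
      then have "c < 1" using N3 by (simp add: mult_less_cancel_left)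
      ultimately show "c = 0" by simp
    qed
    then have "B - A = q + 1" using BA by simp
    then have GG: "G = q + 1" and Az: "A = 0" using BG Gq A0 by auto
    have Teq: "T = (N - 1) * (q + 1) + \<rho> + 1" using Trep GG by simp
    then have "r - \<rho> - 1 = N * ((r - q - 1 - T) div N + q + 1)"
      using Arep Az by (simp add: algebra_simps)
    moreover have "0 < r - \<rho> - 1" "r - \<rho> - 1 < N"
      using Teq Tb rN \<rho>0 by (simp_all add: algebra_simps)
    ultimately show ?thesis using no_mult_between by blast
  next
    case False
    have "N * c > q + 1" using BA False by simp
    moreover have "N * c \<le> 2 * q + 2" using BA AG Gq B0 by simp
    ultimately have cm: "c = 1"
    proof -
      assume h1: "N * c > q + 1" and h2: "N * c \<le> 2 * q + 2"
      have "N * c > 0" using h1 q0 by simp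
      then have "c > 0" using N3 by (simp add: zero_less_mult_iff)
      moreover have "N * c < N * 2" using h2 qN by simp
      then have "c < 2" using N3 by (simp add: mult_less_cancel_left)
      ultimately show "c = 1" by simp
    qed
    then have AB: "A - B = N - q - 1" using BA by simp
    define d where "d = (u - r - 1) mod N"
    have d0: "0 \<le> d" "d < N" unfolding d_def using N3 by simp_all
    have drep: "u - r - 1 = N * ((u - r - 1) div N) + d" unfolding d_def by simp
    have "d \<noteq> 0"
    proof
      assume "d = 0"
      then have "(r + 1) mod N = u mod N" using drep
        by (metis add_diff_cancel_left' diff_add_cancel diff_diff_eq mod_mult_self3 mult.commute add.commute add_0)
      then show False using notin[of "r+1"] q0 by simp
    qed
    moreover have dle: "d \<le> N - q - 2"
    proof (rule ccontr)
      assume nd: "\<not> d \<le> N - q - 2"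
      define z where "z = r + 1 + d - N"
      have "r - q \<le> z" "z \<le> r + 1" using nd d0 unfolding z_def by simp_all
      moreover have "z mod N = u mod N"
      proof -
        have "u = z + N * ((u - r - 1) div N + 1)" using drep unfolding z_def by (simp add: algebra_simps)
        then show ?thesis by (metis mod_mult_self2)
      qed
      ultimately show False using notin by blast
    qed
    ultimately have "(u - T - 1) mod N = d + B"
      using mod_uniq[of "u - T - 1" N "(u - r - 1) div N + (r - T) div N" "d + B"] drep Brep d0 B0 AB A0
      by (simp add: algebra_simps)
    then show ?thesis using AB dle AG unfolding G_def by simp
  qed
qed



lemma A0_nn: "A0 n xs \<ge> 0"
  unfolding A0_def mu_def by (auto split: list.splits)

lemma Ak_nn: "Ak n q r xs \<ge> 0"
  unfolding Ak_def mu_def by (auto split: list.splits)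

lemma A0_Ak: "A0 n xs > 0 \<Longrightarrow> Ak n q r xs > 0"
  unfolding Ak_def A0_def by (auto split: list.splits if_splits)

lemma A0_rep: "m \<ge> 2 \<Longrightarrow> A0 n (u # replicate (m-1) v) = mu n u v"
  unfolding A0_def by (cases "m - 1") auto

lemma Ak_rep: "m \<ge> 2 \<Longrightarrow> Ak n q r (u # replicate (m-1) v) = mu n u v"
  unfolding Ak_def by (cases "m - 1") auto

lemma Sset_sub: "Sset n m A t j \<subseteq> {1..n}"
  unfolding Sset_def by auto

lemma S_A0_1: "m \<ge> 2 \<Longrightarrow> Sset n m (A0 n) (Suc 0) j = {u\<in>{1..n}. mu n u j > 0}"
  using A0_rep[simplified] by (simp add: Sset_1)

lemma S_Ak_1: "m \<ge> 2 \<Longrightarrow> Sset n m (Ak n q r) (Suc 0) j = {u\<in>{1..n}. mu n u j > 0}"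
  using Ak_rep[simplified] by (simp add: Sset_1)

lemma S_A0_step:
  assumes m: "m \<ge> 2" and t: "t \<ge> 1"
  shows "Sset n m (A0 n) (Suc t) j = {u\<in>{1..n}. \<exists>v\<in>Sset n m (A0 n) t j. mu n u v > 0}"
proof -
  have e: "Sset n m (A0 n) (Suc t) j = {u\<in>{1..n}. \<exists>js. length js = m-1 \<and> set js \<subseteq> {1..n}
            \<and> A0 n (u#js) > 0 \<and> set js \<subseteq> Sset n m (A0 n) t j}"
    using Sset_Suc[OF _ m t] A0_nn by blast
  show ?thesis unfolding e
  proof (rule set_eqI, rule iffI)
    fix u assume "u \<in> {u\<in>{1..n}. \<exists>js. length js = m-1 \<and> set js \<subseteq> {1..n}
            \<and> A0 n (u#js) > 0 \<and> set js \<subseteq> Sset n m (A0 n) t j}"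
    then obtain js where u: "u \<in> {1..n}" and h: "length js = m-1" "A0 n (u#js) > 0" "set js \<subseteq> Sset n m (A0 n) t j"
      by blast
    from h(2) have "js \<noteq> [] \<and> mu n u (hd js) > 0" unfolding A0_def by (auto split: if_splits)
    then have "hd js \<in> Sset n m (A0 n) t j" "mu n u (hd js) > 0" using h(3) by auto
    then show "u \<in> {u\<in>{1..n}. \<exists>v\<in>Sset n m (A0 n) t j. mu n u v > 0}" using u by blast
  next
    fix u assume "u \<in> {u\<in>{1..n}. \<exists>v\<in>Sset n m (A0 n) t j. mu n u v > 0}"
    then obtain v where u: "u \<in> {1..n}" and v: "v \<in> Sset n m (A0 n) t j" "mu n u v > 0" by blast
    have "length (replicate (m-1) v) = m-1" by simp
    moreover have "set (replicate (m-1) v) \<subseteq> Sset n m (A0 n) t j" using v m by simp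
    moreover have "set (replicate (m-1) v) \<subseteq> {1..n}" using v(1) Sset_sub m by fastforce
    moreover have "A0 n (u # replicate (m-1) v) > 0" using A0_rep[OF m] v by simp
    ultimately show "u \<in> {u\<in>{1..n}. \<exists>js. length js = m-1 \<and> set js \<subseteq> {1..n}
            \<and> A0 n (u#js) > 0 \<and> set js \<subseteq> Sset n m (A0 n) t j}" using u by blast
  qed
qed

lemma R_base:
  fixes J :: int
  assumes n3: "n \<ge> 3" and J: "0 \<le> J" "J \<le> int n - 2"
  shows "R n (J + 1) (gg n (J + 1)) = {nat (J + 1)}"
proof -
  have g: "gg n (J + 1) = 0" unfolding gg_def using J n3 by (simp add: div_pos_pos_trivial)
  show ?thesis
  proof (rule set_eqI)
    fix u
    show "u \<in> R n (J + 1) (gg n (J + 1)) \<longleftrightarrow> u \<in> {nat (J + 1)}"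
    proof
      assume "u \<in> R n (J + 1) (gg n (J + 1))"
      then have u: "1 \<le> u" "u \<le> n" and "(int u - (J + 1)) mod int n \<le> 0" unfolding R_def g by auto
      moreover have "0 \<le> (int u - (J + 1)) mod int n" using n3 by simp
      ultimately have "(int u - (J + 1)) mod int n = 0" by linarith
      then have dv: "int u - (J+1) = int n * ((int u - (J + 1)) div int n)"
        using div_mult_mod_eq[of "int u - (J+1)" "int n"] by (simp add: mult.commute)
      show "u \<in> {nat (J + 1)}"
      proof (rule ccontr)
        assume "u \<notin> {nat (J + 1)}"
        then have ne: "int u \<noteq> J + 1" by auto
        show False
        proof (cases "int u > J + 1")
          case True
          then have "0 < int u - (J+1)" "int u - (J+1) < int n" using u J by auto
          then show False using no_mult_between dv by blast
        next
          case False
          then have "0 < J + 1 - int u" "J + 1 - int u < int n" using ne u J by auto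
          moreover have "J + 1 - int u = int n * (- ((int u - (J + 1)) div int n))" using dv by simp
          ultimately show False using no_mult_between by blast
        qed
      qed
    next
      assume "u \<in> {nat (J + 1)}"
      then show "u \<in> R n (J + 1) (gg n (J + 1))" unfolding R_def g using J n3 by auto
    qed
  qed
qed

lemma S_A0_R:
  assumes n3: "n \<ge> 3" and m: "m \<ge> 2" and j: "(1 \<le> j \<and> j \<le> n - 2) \<or> j = n"
  shows "t \<ge> 1 \<Longrightarrow> Sset n m (A0 n) t j = R n ((if j = n then 0 else int j) + int t) (gg n ((if j = n then 0 else int j) + int t))"
proof (induction t)
  case 0 then show ?case by simp
next
  case (Suc t)
  define J where "J = (if j = n then 0 else int j)"
  have J: "0 \<le> J" "J \<le> int n - 2" using j n3 unfolding J_def by auto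
  show ?case
  proof (cases "t = 0")
    case True
    have "{u\<in>{1..n}. mu n u j > 0} = {nat (J + 1)}"
      using j n3 unfolding J_def mu_def by auto
    then show ?thesis using True S_A0_1[OF m] R_base[OF n3 J] unfolding J_def by simp
  next
    case False
    then have IH: "Sset n m (A0 n) t j = R n (J + int t) (gg n (J + int t))" using Suc J_def by simp
    have "Sset n m (A0 n) (Suc t) j = R n (J + int t + 1) (gg n (J + int t + 1))"
      using S_A0_step[OF m, of t n j] False IH step_R[OF n3, of "J + int t"] J by simp
    then show ?thesis unfolding J_def by (simp add: ac_simps)
  qed
qed

lemma modn_mod: "n > 0 \<Longrightarrow> modn n z mod int n = z mod int n"
  unfolding modn_def by simp

lemma modn_eq:
  assumes "n > 0" "1 \<le> u" "u \<le> n" "z mod int n = int u mod int n"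
  shows "modn n z = int u"
proof (cases "u = n")
  case True then show ?thesis using assms unfolding modn_def by simp
next
  case False
  then have "int u mod int n = int u" using assms by simp
  then show ?thesis using assms False unfolding modn_def by auto
qed



lemma Ak_step:
  assumes n3: "n \<ge> 3" and m: "m \<ge> 2" and j: "(1 \<le> j \<and> j \<le> n - 2) \<or> j = n"
    and qn: "int q + 3 \<le> int n" and r1: "1 \<le> r" and rn: "r \<le> n - 1"
    and t: "1 \<le> t" and tk: "Suc t \<le> (n - 1) * q + r"
    and IH: "Sset n m (Ak n q r) t j = Sset n m (A0 n) t j"
  shows "Sset n m (Ak n q r) (Suc t) j = Sset n m (A0 n) (Suc t) j"
proof -
  define S where "S = Sset n m (A0 n) t j"
  define N where "N = int n"
  define J where "J = (if j = n then 0 else int j)"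
  define T where "T = J + int t"
  have J: "0 \<le> J" "J \<le> N - 2" using j n3 unfolding J_def N_def by auto
  have eAk: "Sset n m (Ak n q r) (Suc t) j = {u\<in>{1..n}. \<exists>js. length js = m-1 \<and> set js \<subseteq> {1..n}
            \<and> Ak n q r (u#js) > 0 \<and> set js \<subseteq> S}"
    unfolding S_def IH[symmetric] by (rule Sset_Suc[OF Ak_nn m t])
  have eA0: "Sset n m (A0 n) (Suc t) j = {u\<in>{1..n}. \<exists>js. length js = m-1 \<and> set js \<subseteq> {1..n}
            \<and> A0 n (u#js) > 0 \<and> set js \<subseteq> S}"
    unfolding S_def by (rule Sset_Suc[OF A0_nn m t])
  have SR: "S = R n T (gg n T)" unfolding S_def T_def J_def using S_A0_R[OF n3 m j t] by simp
  have SR': "Sset n m (A0 n) (Suc t) j = R n (T + 1) (gg n (T + 1))"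
    unfolding T_def J_def using S_A0_R[OF n3 m j, of "Suc t"] by (simp add: ac_simps)
  have modsub: "(modn n z - T) mod N = (z - T) mod N" for z
  proof -
    have n0: "n > 0" using n3 by simp
    have "(modn n z - T) mod N = ((modn n z) mod N - T) mod N" by (simp add: mod_diff_left_eq)
    also have "\<dots> = (z mod N - T) mod N" using modn_mod[OF n0] unfolding N_def by simp
    also have "\<dots> = (z - T) mod N" by (simp add: mod_diff_left_eq)
    finally show ?thesis .
  qed
  show ?thesis
  proof (rule set_eqI, rule iffI)
    fix u assume "u \<in> Sset n m (Ak n q r) (Suc t) j"
    then obtain js where u: "u \<in> {1..n}" and h: "length js = m-1" "set js \<subseteq> {1..n}"
       "Ak n q r (u#js) > 0" "set js \<subseteq> S" unfolding eAk by blast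
    show "u \<in> Sset n m (A0 n) (Suc t) j"
    proof (cases "js \<noteq> [] \<and> (\<forall>x\<in>set js. x = hd js)")
      case True
      then have "A0 n (u#js) = Ak n q r (u#js)" unfolding A0_def Ak_def by simp
      then show ?thesis unfolding eA0 using u h by auto
    next
      case False
      then have c: "int u \<notin> modn n ` {int r - int q .. int r + 1}"
        and js: "int ` set js = {modn n (int r - int q - 1), modn n (int r)}"
        using h(3) unfolding Ak_def by (auto split: if_splits)
      obtain sa where sa: "sa \<in> set js" "int sa = modn n (int r - int q - 1)" using js
        by (metis imageE insertI1)
      obtain sb where sb: "sb \<in> set js" "int sb = modn n (int r)" using js
        by (metis imageE insertI1 insert_commute)
      define G where "G = gg n T"
      have "sa \<in> R n T G" using sa h(4) SR G_def by auto
      then have Da: "(int r - int q - 1 - T) mod N \<le> (T - 1) div (N - 1)"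
        unfolding R_def G_def gg_def N_def using sa(2) modsub[unfolded N_def] by auto
      have "sb \<in> R n T G" using sb h(4) SR G_def by auto
      then have Db: "(int r - T) mod N \<le> (T - 1) div (N - 1)"
        unfolding R_def G_def gg_def N_def using sb(2) modsub[unfolded N_def] by auto
      have notin: "z mod N \<noteq> int u mod N" if "int r - int q \<le> z" "z \<le> int r + 1" for z
      proof
        assume "z mod N = int u mod N"
        then have "modn n z = int u" using modn_eq[of n u z] u n3 unfolding N_def by auto
        then have "int u \<in> modn n ` {int r - int q..int r + 1}" using that
          by (metis atLeastAtMost_iff image_eqI)
        then show False using c by blast
      qed
      have Tb: "T \<le> (N - 1) * int q + int r + N - 3"
      proof -
        have "int (Suc t) \<le> int ((n - 1) * q + r)" using tk by linarith
        then have "int t + 1 \<le> (N - 1) * int q + int r" using n3 unfolding N_def by (simp add: of_nat_diff)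
        then show ?thesis unfolding T_def using J by linarith
      qed
      have cb: "(int u - T - 1) mod N \<le> (T - 1) div (N - 1)"
        apply (rule comb[of N "int q" "int r" T "int u"])
        using n3 qn r1 rn J t Tb Da Db u notin unfolding N_def T_def by (auto simp: of_nat_diff)
      have "(T - 1) div (N - 1) \<le> T div (N - 1)" using n3 unfolding N_def by (simp add: zdiv_mono1)
      then have "u \<in> R n (T + 1) (gg n (T + 1))"
        using cb u unfolding R_def gg_def N_def by (simp add: algebra_simps)
      then show ?thesis using SR' by simp
    qed
  next
    fix u assume "u \<in> Sset n m (A0 n) (Suc t) j"
    then obtain js where u: "u \<in> {1..n}" and h: "length js = m-1" "set js \<subseteq> {1..n}"
       "A0 n (u#js) > 0" "set js \<subseteq> S" unfolding eA0 by blast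
    then have "Ak n q r (u#js) > 0" using A0_Ak by blast
    then show "u \<in> Sset n m (Ak n q r) (Suc t) j" unfolding eAk using u h by blast
  qed
qed

theorem proposition3p2:
  fixes m n k q r :: nat
  assumes "m \<ge> 2"
    and "1 \<le> k" and "int k \<le> int n ^ 2 - 3 * int n + 2"
    and "k = (n - 1) * q + r" and "1 \<le> r" and "r \<le> n - 1"
  shows "\<forall>t j. 1 \<le> t \<and> t \<le> k \<and> j \<in> {1..n-2} \<union> {n} \<longrightarrow>
           Sset n m (Ak n q r) t j = Sset n m (A0 n) t j"
proof (intro allI impI)
  fix t j assume h: "1 \<le> t \<and> t \<le> k \<and> j \<in> {1..n-2} \<union> {n}"
  have n2: "n \<ge> 2" using assms(5,6) by linarith
  have n3: "n \<ge> 3"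
  proof (rule ccontr)
    assume "\<not> n \<ge> 3"
    then have "n = 2" using n2 by simp
    then show False using assms(2,3) by simp
  qed
  have qn: "int q + 3 \<le> int n"
  proof (rule ccontr)
    assume "\<not> int q + 3 \<le> int n"
    then have "int n - 2 \<le> int q" by simp
    moreover have "0 \<le> int n - 1" using n3 by simp
    ultimately have "(int n - 1) * (int n - 2) \<le> (int n - 1) * int q" by (rule mult_left_mono)
    moreover have "int k = (int n - 1) * int q + int r" using assms(4) n3 by (simp add: of_nat_diff)
    moreover have "int n ^ 2 - 3 * int n + 2 = (int n - 1) * (int n - 2)" by (simp add: algebra_simps power2_eq_square)
    ultimately show False using assms(3,5) by linarith
  qed
  have j: "(1 \<le> j \<and> j \<le> n - 2) \<or> j = n" using h by auto
  have "1 \<le> t \<longrightarrow> t \<le> k \<longrightarrow> Sset n m (Ak n q r) t j = Sset n m (A0 n) t j" for t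
  proof (induction t)
    case 0 then show ?case by simp
  next
    case (Suc t)
    show ?case
    proof (cases "t = 0")
      case True
      then show ?thesis using S_A0_1[OF assms(1)] S_Ak_1[OF assms(1)] by simp
    next
      case False
      then show ?thesis using Suc Ak_step[OF n3 assms(1) j qn assms(5,6), of t] assms(4) by simp
    qed
  qed
  then show "Sset n m (Ak n q r) t j = Sset n m (A0 n) t j" using h by blast
qed


end
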